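(* Let $p$ be an odd prime, let $m\ge 0$ and $i\ge 0$ be integers, and let $n=(m+i)p-i=i(p-1)+mp\ge 1$. Let $u$ be a partition with $\omega(u)=n$ and $d(u)\le i+1$. Then there exists a reduced partition $u'$ such that $\omega(u')=n$, $d(u')\le i+1$ and $v_p(\tau_u)\ge v_p(\tau_{u'})$.
   Context: A partition is a sequence $u=(u_1,u_2,\dots)$ of nonnegative integers, almost all zero ($u_i$ = number of parts equal to $i$); weight $\omega(u)=\sum_i iu_i$, degree $d(u)=\sum_i u_i$. For a partition $u$ of weight $r\ge1$ with degree $d$, $\gamma_u=\prod_{i\ge1}(i+1)^{u_i}u_i!$ and $\tau_u=(-1)^{d-1}\frac{(r+d-2)!}{\gamma_u}$. $v_p$ is the $p$-adic valuation. A partition $u$ is called reduced if every part $i$ with $u_i\ne 0$ is of the form $p^\alpha-1$ ($\alpha\ge1$), except for at most one part $g$ not of this form, and for such a $g$ one has $u_g=1$. *)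

theory Defs
  imports "HOL-Computational_Algebra.Computational_Algebra"
begin

text \<open>A partition: u i = number of parts equal to i (i \<ge> 1); we require u 0 = 0
  and finite support.\<close>
definition is_partition :: "(nat \<Rightarrow> nat) \<Rightarrow> bool" where
  "is_partition u \<longleftrightarrow> u 0 = 0 \<and> finite {i. u i \<noteq> 0}"

definition weight :: "(nat \<Rightarrow> nat) \<Rightarrow> nat" where
  "weight u = (\<Sum>i\<in>{i. u i \<noteq> 0}. i * u i)"

definition pdegree :: "(nat \<Rightarrow> nat) \<Rightarrow> nat" where
  "pdegree u = (\<Sum>i\<in>{i. u i \<noteq> 0}. u i)"

definition gamma :: "(nat \<Rightarrow> nat) \<Rightarrow> nat" where
  "gamma u = (\<Prod>i\<in>{i. u i \<noteq> 0}. (i + 1) ^ u i * fact (u i))"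

definition tau :: "(nat \<Rightarrow> nat) \<Rightarrow> rat" where
  "tau u = (-1) ^ (pdegree u - 1) * of_nat (fact (weight u + pdegree u - 2)) / of_nat (gamma u)"

text \<open>p-adic valuation of a rational number (value 0 at 0, irrelevant here).\<close>
definition vp_rat :: "nat \<Rightarrow> rat \<Rightarrow> int" where
  "vp_rat p x = (case quotient_of x of (a, b) \<Rightarrow>
      int (multiplicity (int p) a) - int (multiplicity (int p) b))"

definition is_reduced :: "nat \<Rightarrow> (nat \<Rightarrow> nat) \<Rightarrow> bool" where
  "is_reduced p u \<longleftrightarrow>
     (\<exists>G. finite G \<and> card G \<le> 1 \<and>
        (\<forall>i. u i \<noteq> 0 \<longrightarrow> (\<exists>\<alpha>\<ge>1. i = p ^ \<alpha> - 1) \<or> i \<in> G) \<and>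
        (\<forall>g\<in>G. u g = 1 \<and> \<not> (\<exists>\<alpha>\<ge>1. g = p ^ \<alpha> - 1)))"

end

theory Submission
  imports Defs
begin


lemma mult_int_nat:
  fixes p a :: nat
  assumes "prime p" "a > 0"
  shows "multiplicity (int p) (int a) = multiplicity p a"
proof (rule antisym)
  have pi: "prime (int p)" using assms by simp
  have "int p ^ multiplicity (int p) (int a) dvd int a" by (rule multiplicity_dvd)
  hence "p ^ multiplicity (int p) (int a) dvd a"
    by (metis of_nat_dvd_iff of_nat_power)
  thus "multiplicity (int p) (int a) \<le> multiplicity p a"
    using assms by (subst (asm) power_dvd_iff_le_multiplicity) auto
  have "p ^ multiplicity p a dvd a" by (rule multiplicity_dvd)
  hence "int p ^ multiplicity p a dvd int a"
    by (metis of_nat_dvd_iff of_nat_power)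
  thus "multiplicity p a \<le> multiplicity (int p) (int a)"
    using assms pi by (subst (asm) power_dvd_iff_le_multiplicity) (auto simp: prime_gt_1_int)
qed

lemma vp_rat_frac:
  fixes p a b :: nat and s :: rat and k :: nat
  assumes "prime p" "a > 0" "b > 0"
  shows "vp_rat p ((-1)^k * of_nat a / of_nat b) = int (multiplicity p a) - int (multiplicity p b)"
proof -
  obtain c e where q: "quotient_of ((-1)^k * of_nat a / of_nat b) = (c, e)" by (cases "quotient_of ((-1)^k * of_nat a / of_nat b)") auto
  have e: "e > 0" using quotient_of_denom_pos[OF q] .
  have x: "(-1)^k * of_nat a / of_nat b = (of_int c / of_int e :: rat)" using quotient_of_div[OF q] .
  have "of_int (c * int b) = (of_int ((-1)^k * int a * e) :: rat)"
    using x e assms by (simp add: field_simps)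
  hence ceq: "c * int b = (-1)^k * int a * e" by (simp only: of_int_eq_iff)
  have c0: "c \<noteq> 0" using ceq assms e by auto
  have pe: "prime_elem (int p)" using assms by simp
  have "multiplicity (int p) (c * int b) = multiplicity (int p) c + multiplicity (int p) (int b)"
    using c0 assms by (intro prime_elem_multiplicity_mult_distrib[OF pe]) auto
  moreover have "multiplicity (int p) ((-1)^k * int a * e) = multiplicity (int p) (int a) + multiplicity (int p) e"
  proof -
    have "multiplicity (int p) ((-1)^k * int a * e) = multiplicity (int p) (int a * e)"
      by (cases "even k") (auto simp: multiplicity_uminus_right)
    also have "\<dots> = multiplicity (int p) (int a) + multiplicity (int p) e"
      using e assms by (intro prime_elem_multiplicity_mult_distrib[OF pe]) auto
    finally show ?thesis .
  qed
  ultimately have "multiplicity (int p) c + multiplicity p b = multiplicity p a + multiplicity (int p) e"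
    using ceq mult_int_nat assms by metis
  thus ?thesis unfolding vp_rat_def q by simp
qed

lemma mult_le_self:
  fixes p m :: nat assumes "prime p" "m > 0"
  shows "multiplicity p m \<le> m"
proof -
  have "p ^ multiplicity p m dvd m" by (rule multiplicity_dvd)
  hence "p ^ multiplicity p m \<le> m" using assms dvd_imp_le by blast
  moreover have "multiplicity p m < 2 ^ multiplicity p m" by (rule less_exp)
  moreover have "2 ^ multiplicity p m \<le> p ^ multiplicity p m"
    using prime_ge_2_nat[OF assms(1)] by (simp add: power_mono)
  ultimately show ?thesis by linarith
qed

lemma mult_card:
  fixes p m K :: nat assumes "prime p" "m > 0" "m \<le> K"
  shows "multiplicity p m = card {a\<in>{1..K}. p ^ a dvd m}"
proof -
  have iff: "p ^ a dvd m \<longleftrightarrow> a \<le> multiplicity p m" for a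
    using assms by (intro power_dvd_iff_le_multiplicity) auto
  have "{a\<in>{1..K}. p ^ a dvd m} = {1..multiplicity p m}"
  proof (intro equalityI subsetI)
    fix a assume "a \<in> {a\<in>{1..K}. p ^ a dvd m}"
    thus "a \<in> {1..multiplicity p m}" using iff[of a] by auto
  next
    fix a assume a: "a \<in> {1..multiplicity p m}"
    hence "p ^ a dvd m" using iff[of a] by auto
    thus "a \<in> {a\<in>{1..K}. p ^ a dvd m}" using a mult_le_self[OF assms(1,2)] assms(3) by auto
  qed
  thus ?thesis by simp
qed

lemma legendre:
  fixes p N K :: nat assumes "prime p" "N \<le> K"
  shows "multiplicity p (fact N) = (\<Sum>a\<in>{1..K}. N div p ^ a)"
  using assms(2)
proof (induction N)
  case 0
  then show ?case by simp
next
  case (Suc N)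
  have pe: "prime_elem p" using assms by simp
  have "multiplicity p (fact (Suc N)) = multiplicity p (Suc N * fact N)" by simp
  also have "\<dots> = multiplicity p (Suc N) + multiplicity p (fact N :: nat)"
    by (rule prime_elem_multiplicity_mult_distrib[OF pe]) auto
  also have "multiplicity p (fact N :: nat) = (\<Sum>a\<in>{1..K}. N div p ^ a)" using Suc by simp
  also have "multiplicity p (Suc N) = card {a\<in>{1..K}. p ^ a dvd Suc N}"
    using Suc.prems by (intro mult_card[OF assms(1)]) auto
  also have "\<dots> = (\<Sum>a\<in>{1..K}. if p ^ a dvd Suc N then 1 else 0)"
  proof -
    have "{a\<in>{1..K}. p ^ a dvd Suc N} = {1..K} \<inter> {a. p ^ a dvd Suc N}" by auto
    thus ?thesis by (simp add: sum.If_cases)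
  qed
  finally have "multiplicity p (fact (Suc N)) = (\<Sum>a\<in>{1..K}. (if p ^ a dvd Suc N then 1 else 0) + N div p ^ a)"
    by (simp add: sum.distrib)
  also have "\<dots> = (\<Sum>a\<in>{1..K}. Suc N div p ^ a)"
    by (intro sum.cong refl) (auto simp: div_Suc dvd_eq_mod_eq_0)
  finally show ?case .
qed

lemma part_sums:
  assumes "finite A" "{i. u i \<noteq> 0} \<subseteq> A"
  shows "weight u = (\<Sum>i\<in>A. i * u i)" "pdegree u = (\<Sum>i\<in>A. u i)"
    "gamma u = (\<Prod>i\<in>A. (i + 1) ^ u i * fact (u i))"
proof -
  show "weight u = (\<Sum>i\<in>A. i * u i)" unfolding weight_def
    by (rule sum.mono_neutral_left) (use assms in auto)
  show "pdegree u = (\<Sum>i\<in>A. u i)" unfolding pdegree_def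
    by (rule sum.mono_neutral_left) (use assms in auto)
  show "gamma u = (\<Prod>i\<in>A. (i + 1) ^ u i * fact (u i))" unfolding gamma_def
    by (rule prod.mono_neutral_left) (use assms in auto)
qed

lemma gamma_pos: "finite {i. u i \<noteq> 0} \<Longrightarrow> gamma u > 0"
  unfolding gamma_def by (intro prod_pos) auto

lemma vp_tau:
  assumes "prime p" "is_partition u"
  shows "vp_rat p (tau u) = int (multiplicity p (fact (weight u + pdegree u - 2) :: nat)) - int (multiplicity p (gamma u))"
  unfolding tau_def
  by (rule vp_rat_frac) (use assms gamma_pos in \<open>auto simp: is_partition_def\<close>)

lemma Vgamma:
  assumes "prime p" "finite A" "{i. u i \<noteq> 0} \<subseteq> A"
  shows "multiplicity p (gamma u) = (\<Sum>i\<in>A. u i * multiplicity p (i + 1) + multiplicity p (fact (u i) :: nat))"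
proof -
  have pe: "prime_elem p" using assms by simp
  have "multiplicity p (gamma u) = (\<Sum>i\<in>A. multiplicity p ((i + 1) ^ u i * fact (u i) :: nat))"
    unfolding part_sums(3)[OF assms(2,3)]
    by (rule prime_elem_multiplicity_prod_distrib[OF pe]) (use assms in auto)
  also have "\<dots> = (\<Sum>i\<in>A. u i * multiplicity p (i + 1) + multiplicity p (fact (u i) :: nat))"
    by (intro sum.cong refl)
       (simp add: prime_elem_multiplicity_mult_distrib[OF pe] prime_elem_multiplicity_power_distrib[OF pe])
  finally show ?thesis .
qed

lemma Vfact_mono: "prime p \<Longrightarrow> a \<le> b \<Longrightarrow> multiplicity p (fact a :: nat) \<le> multiplicity p (fact b :: nat)"
  by (intro dvd_imp_multiplicity_le fact_dvd) auto

lemma Vfact_add: "prime p \<Longrightarrow> multiplicity p (fact a :: nat) + multiplicity p (fact b :: nat) \<le> multiplicity p (fact (a + b) :: nat)"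
proof -
  assume p: "prime p"
  have pe: "prime_elem p" using p by simp
  have "multiplicity p (fact a :: nat) + multiplicity p (fact b :: nat) = multiplicity p (fact a * fact b :: nat)"
    by (rule prime_elem_multiplicity_mult_distrib[OF pe, symmetric]) auto
  also have "\<dots> \<le> multiplicity p (fact (a + b) :: nat)"
    by (intro dvd_imp_multiplicity_le) (auto simp: fact_fact_dvd_fact)
  finally show ?thesis .
qed

lemma Vfact_sum:
  assumes "prime p" "finite B"
  shows "(\<Sum>j\<in>B. multiplicity p (fact (h j) :: nat)) \<le> multiplicity p (fact (\<Sum>j\<in>B. h j) :: nat)"
  using assms(2)
proof (induction B rule: finite_induct)
  case empty
  then show ?case by simp
next
  case (insert x F)
  have "(\<Sum>j\<in>insert x F. multiplicity p (fact (h j) :: nat)) = multiplicity p (fact (h x) :: nat) + (\<Sum>j\<in>F. multiplicity p (fact (h j) :: nat))"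
    using insert by simp
  also have "\<dots> \<le> multiplicity p (fact (h x) :: nat) + multiplicity p (fact (\<Sum>j\<in>F. h j) :: nat)"
    using insert by simp
  also have "\<dots> \<le> multiplicity p (fact (h x + (\<Sum>j\<in>F. h j)) :: nat)"
    by (rule Vfact_add[OF assms(1)])
  finally show ?case using insert by simp
qed

lemma arith_block:
  fixes q t c N :: nat
  assumes "q > 0" "t * q \<le> c" "c \<ge> 1" "t * q = c \<Longrightarrow> N mod q \<noteq> 0"
  shows "N div q + t \<le> (N + (c - 1)) div q"
proof (cases "t * q < c")
  case True
  hence "t * q \<le> c - 1" by simp
  hence "t * q div q \<le> (c - 1) div q" by (rule div_le_mono)
  hence "t \<le> (c - 1) div q" using assms(1) by simp
  moreover have "N div q + (c - 1) div q \<le> (N + (c - 1)) div q" using div_add1_eq[of N "c - 1" q] by linarith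
  ultimately show ?thesis by linarith
next
  case False
  hence c: "c = t * q" using assms by simp
  hence r: "N mod q \<noteq> 0" using assms by simp
  have t1: "t \<ge> 1" using c assms by (cases t) auto
  define X where "X = N div q"
  define r where "r = N mod q"
  have X: "N = q * X + r" unfolding X_def r_def by simp
  have rq: "r < q" "r \<ge> 1" using r assms(1) unfolding r_def by auto
  obtain t' where t': "t = Suc t'" using t1 by (cases t) auto
  have "c - 1 = q * t' + (q - 1)" using c t' assms(1) by (simp add: algebra_simps)
  hence "N + (c - 1) = q * (X + t) + (r - 1)"
    using X t' rq by (simp add: algebra_simps)
  moreover have "r - 1 < q" using rq by linarith
  ultimately have "(N + (c - 1)) div q = X + t" using assms(1) by simp
  thus ?thesis unfolding X_def by simp
qed
theorem lemma3p2:
  fixes p m i n :: nat and u :: "nat \<Rightarrow> nat"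
  assumes "prime p" and "odd p"
    and "n = (m + i) * p - i" and "n \<ge> 1"
    and "is_partition u" and "weight u = n" and "pdegree u \<le> i + 1"
  shows "\<exists>u'. is_partition u' \<and> is_reduced p u' \<and> weight u' = n \<and> pdegree u' \<le> i + 1
           \<and> vp_rat p (tau u) \<ge> vp_rat p (tau u')"
proof -
  note p = assms(1)
  have p2: "p \<ge> 2" using prime_ge_2_nat[OF p] .
  have pe: "prime_elem p" using p by simp
  have pnu: "\<not> is_unit p" using p2 by simp
  have u0: "u 0 = 0" and fin: "finite {i. u i \<noteq> 0}" using assms(5) by (auto simp: is_partition_def)
  define A where "A = {..n}"
  have finA: "finite A" by (simp add: A_def)
  have suppA: "{j. u j \<noteq> 0} \<subseteq> A"
  proof
    fix j assume j: "j \<in> {j. u j \<noteq> 0}"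
    hence "j * u j \<le> weight u" unfolding weight_def using fin by (intro member_le_sum) auto
    moreover have "j \<le> j * u j" using j by simp
    ultimately have "j \<le> n" using assms(6) by linarith
    thus "j \<in> A" by (simp add: A_def)
  qed
  have nA: "n = (\<Sum>j\<in>A. j * u j)" using part_sums(1)[OF finA suppA] assms(6) by simp
  define d where "d = pdegree u"
  have dA: "d = (\<Sum>j\<in>A. u j)" using part_sums(2)[OF finA suppA] d_def by simp
  define S where "S = {j\<in>A. p dvd (j + 1)}"
  define J where "J = {j\<in>A. \<not> p dvd (j + 1)}"
  have finS: "finite S" and finJ: "finite J" using finA by (auto simp: S_def J_def)
  have split: "(\<Sum>j\<in>A. h j) = (\<Sum>j\<in>S. h j) + (\<Sum>j\<in>J. h j)" for h :: "nat \<Rightarrow> nat"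
  proof -
    have "A = S \<union> J" "S \<inter> J = {}" by (auto simp: S_def J_def)
    thus ?thesis using finS finJ by (simp add: sum.union_disjoint)
  qed
  define f where "f j = p ^ multiplicity p (j + 1) - 1" for j
  have f1: "f j + 1 = p ^ multiplicity p (j + 1)" for j
    using p2 by (simp add: f_def)
  have fle: "f j \<le> j" for j
  proof -
    have "p ^ multiplicity p (j+1) dvd j + 1" by (rule multiplicity_dvd)
    hence "p ^ multiplicity p (j+1) \<le> j + 1" by (rule dvd_imp_le) simp
    thus ?thesis using f1[of j] by linarith
  qed
  have Vpos: "multiplicity p (j + 1) \<ge> 1" if "j \<in> S" for j
  proof -
    have "p ^ 1 dvd j + 1" using that by (simp add: S_def)
    thus ?thesis using power_dvd_iff_le_multiplicity[of "j+1" p 1] pnu by simp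
  qed
  have fpos: "f j \<ge> 1" if "j \<in> S" for j
  proof -
    have "p ^ 1 \<le> p ^ multiplicity p (j+1)" using p2 Vpos[OF that] by (intro power_increasing) auto
    thus ?thesis using f1[of j] p2 by simp
  qed
  have Vf: "multiplicity p (f j + 1) = multiplicity p (j + 1)" for j
    unfolding f1 by (rule multiplicity_prime_power[OF pe])
  have VJ: "multiplicity p (j + 1) = 0" if "j \<in> J" for j
    using that by (simp add: J_def not_dvd_imp_multiplicity_0)
  define s where "s = (\<Sum>j\<in>S. u j)"
  define c0 where "c0 = (\<Sum>j\<in>J. u j)"
  have d_sc: "d = s + c0" using split[of u] dA s_def c0_def by simp
  define W where "W = (\<Sum>j\<in>S. f j * u j)"
  have WS: "W \<le> (\<Sum>j\<in>S. j * u j)" unfolding W_def by (intro sum_mono) (simp add: fle mult_le_mono1)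
  have n_split: "n = (\<Sum>j\<in>S. j * u j) + (\<Sum>j\<in>J. j * u j)" using nA split[of "\<lambda>j. j * u j"] by simp
  have ns: "n + s = (\<Sum>j\<in>S. (j + 1) * u j) + (\<Sum>j\<in>J. j * u j)"
    using n_split s_def by (simp add: sum.distrib algebra_simps)
  define g where "g = n - W"
  have gW: "g + W = n" using WS n_split by (simp add: g_def)
  define c where "c k = (\<Sum>j\<in>{j\<in>S. f j = k}. u j)" for k
  define u' where "u' k = c k + (if k = g \<and> 0 < g then 1 else 0)" for k
  have gle: "g \<le> n" by (simp add: g_def)
  have cA: "\<exists>j\<in>S. f j = k \<and> u j \<noteq> 0" if "c k \<noteq> 0" for k
  proof (rule ccontr)
    assume "\<not> ?thesis"
    hence "c k = 0" unfolding c_def by (intro sum.neutral) auto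
    thus False using that by simp
  qed
  have SA: "j \<in> S \<Longrightarrow> j \<le> n" for j by (simp add: S_def A_def)
  have supp': "{k. u' k \<noteq> 0} \<subseteq> A"
  proof
    fix k assume "k \<in> {k. u' k \<noteq> 0}"
    hence "c k \<noteq> 0 \<or> k = g" by (auto simp: u'_def split: if_splits)
    thus "k \<in> A"
    proof
      assume "c k \<noteq> 0"
      then obtain j where "j \<in> S" "f j = k" using cA by blast
      thus ?thesis using fle[of j] SA[of j] by (auto simp: A_def)
    qed (use gle in \<open>auto simp: A_def\<close>)
  qed
  have u'0: "u' 0 = 0"
  proof -
    have "c 0 = 0" unfolding c_def using fpos by (intro sum.neutral) fastforce
    thus ?thesis by (auto simp: u'_def)
  qed
  have part': "is_partition u'" unfolding is_partition_def using u'0 supp' finA finite_subset by blast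
  have fS: "f ` S \<subseteq> A"
  proof
    fix y assume "y \<in> f ` S"
    then obtain j where "j \<in> S" "y = f j" by blast
    thus "y \<in> A" using fle[of j] SA[of j] by (simp add: A_def)
  qed
  have delta: "(\<Sum>k\<in>A. (if k = g \<and> 0 < g then h k else 0)) = (if 0 < g then h g else 0)" for h :: "nat \<Rightarrow> nat"
  proof (cases "0 < g")
    case True
    have "g \<in> A" using gle by (simp add: A_def)
    thus ?thesis using True finA by (simp add: sum.delta)
  qed simp
  have grp: "(\<Sum>k\<in>A. (\<Sum>j\<in>{j\<in>S. f j = k}. h j)) = (\<Sum>j\<in>S. h j)" for h :: "nat \<Rightarrow> nat"
    by (rule sum.group[OF finS finA fS])
  have wt': "weight u' = n"
  proof -
    have pt: "k * u' k = (\<Sum>j\<in>{j\<in>S. f j = k}. f j * u j) + (if k = g \<and> 0 < g then k else 0)" for k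
    proof -
      have "k * c k = (\<Sum>j\<in>{j\<in>S. f j = k}. f j * u j)" unfolding c_def sum_distrib_left
        by (intro sum.cong) auto
      thus ?thesis by (simp add: u'_def distrib_left)
    qed
    have "weight u' = (\<Sum>k\<in>A. k * u' k)" by (rule part_sums(1)[OF finA supp'])
    also have "\<dots> = (\<Sum>k\<in>A. (\<Sum>j\<in>{j\<in>S. f j = k}. f j * u j)) + (\<Sum>k\<in>A. (if k = g \<and> 0 < g then k else 0))"
      unfolding pt by (rule sum.distrib)
    also have "\<dots> = W + g" unfolding grp delta W_def by simp
    finally show ?thesis using gW by simp
  qed
  define d' where "d' = pdegree u'"
  have deg': "d' = s + (if 0 < g then 1 else 0)"
  proof -
    have "d' = (\<Sum>k\<in>A. u' k)" unfolding d'_def by (rule part_sums(2)[OF finA supp'])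
    also have "\<dots> = (\<Sum>k\<in>A. c k) + (\<Sum>k\<in>A. (if k = g \<and> 0 < g then 1 else 0))"
      unfolding u'_def by (rule sum.distrib)
    also have "\<dots> = s + (if 0 < g then 1 else 0)" unfolding c_def grp delta s_def by simp
    finally show ?thesis .
  qed
  define spec where "spec k = (\<exists>\<alpha>\<ge>1. k = p ^ \<alpha> - 1)" for k
  have specf: "spec (f j)" if "j \<in> S" for j
    unfolding spec_def f_def using Vpos[OF that] by blast
  have red': "is_reduced p u'"
  proof -
    define G where "G = (if 0 < g \<and> \<not> spec g then {g} else {})"
    have "finite G \<and> card G \<le> 1 \<and>
        (\<forall>i. u' i \<noteq> 0 \<longrightarrow> (\<exists>\<alpha>\<ge>1. i = p ^ \<alpha> - 1) \<or> i \<in> G) \<and>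
        (\<forall>g\<in>G. u' g = 1 \<and> \<not> (\<exists>\<alpha>\<ge>1. g = p ^ \<alpha> - 1))"
    proof (intro conjI allI impI ballI)
      show "finite G" "card G \<le> 1" by (auto simp: G_def)
    next
      fix k assume "u' k \<noteq> 0"
      hence "c k \<noteq> 0 \<or> (k = g \<and> 0 < g)" by (auto simp: u'_def split: if_splits)
      thus "(\<exists>\<alpha>\<ge>1. k = p ^ \<alpha> - 1) \<or> k \<in> G"
      proof
        assume "c k \<noteq> 0"
        then obtain j where "j \<in> S" "f j = k" using cA by blast
        thus ?thesis using specf unfolding spec_def by blast
      next
        assume "k = g \<and> 0 < g"
        thus ?thesis unfolding G_def spec_def by auto
      qed
    next
      fix k assume k: "k \<in> G"
      hence kg: "k = g" "0 < g" "\<not> spec g" by (auto simp: G_def split: if_splits)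
      have "c k = 0"
      proof (rule ccontr)
        assume "c k \<noteq> 0"
        then obtain j where "j \<in> S" "f j = k" using cA by blast
        thus False using specf kg by blast
      qed
      thus "u' k = 1" using kg by (simp add: u'_def)
      show "\<not> (\<exists>\<alpha>\<ge>1. k = p ^ \<alpha> - 1)" using kg unfolding spec_def by simp
    qed
    thus ?thesis unfolding is_reduced_def by blast
  qed
  define V where "V x = multiplicity p (x :: nat)" for x
  define GS where "GS = (\<Sum>j\<in>S. u j * V (j + 1) + V (fact (u j)))"
  define F0 where "F0 = (\<Sum>j\<in>J. V (fact (u j)))"
  have VgU: "V (gamma u) = GS + F0"
  proof -
    have "V (gamma u) = (\<Sum>j\<in>A. u j * V (j + 1) + V (fact (u j)))"
      unfolding V_def by (rule Vgamma[OF p finA suppA])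
    also have "\<dots> = GS + F0" unfolding split GS_def F0_def using VJ by (simp add: V_def)
    finally show ?thesis .
  qed
  have VgU': "GS \<le> V (gamma u')"
  proof -
    have "GS = (\<Sum>k\<in>A. (\<Sum>j\<in>{j\<in>S. f j = k}. u j * V (j + 1) + V (fact (u j))))"
      unfolding GS_def grp ..
    also have "\<dots> \<le> (\<Sum>k\<in>A. c k * V (k + 1) + V (fact (c k)))"
    proof (intro sum_mono)
      fix k assume "k \<in> A"
      have fb: "finite {j\<in>S. f j = k}" using finS by simp
      have "(\<Sum>j\<in>{j\<in>S. f j = k}. u j * V (j + 1)) = (\<Sum>j\<in>{j\<in>S. f j = k}. u j * V (k + 1))"
        using Vf by (intro sum.cong refl) (auto simp: V_def)
      also have "\<dots> = c k * V (k + 1)" unfolding c_def by (simp add: sum_distrib_right)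
      finally have e1: "(\<Sum>j\<in>{j\<in>S. f j = k}. u j * V (j + 1)) = c k * V (k + 1)" .
      have e2: "(\<Sum>j\<in>{j\<in>S. f j = k}. V (fact (u j))) \<le> V (fact (c k))"
        unfolding V_def c_def by (rule Vfact_sum[OF p fb])
      show "(\<Sum>j\<in>{j\<in>S. f j = k}. u j * V (j + 1) + V (fact (u j))) \<le> c k * V (k + 1) + V (fact (c k))"
        using e1 e2 by (simp add: sum.distrib)
    qed
    also have "\<dots> \<le> (\<Sum>k\<in>A. u' k * V (k + 1) + V (fact (u' k)))"
    proof (intro sum_mono add_mono)
      fix k
      have "c k \<le> u' k" by (simp add: u'_def)
      thus "c k * V (k + 1) \<le> u' k * V (k + 1)" "V (fact (c k)) \<le> V (fact (u' k))"
        by (auto simp: V_def intro: mult_le_mono1 Vfact_mono[OF p])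
    qed
    also have "\<dots> = V (gamma u')"
      unfolding V_def by (rule Vgamma[OF p finA supp', symmetric])
    finally show ?thesis .
  qed
  have key: "V (fact (n + d' - 2)) + F0 \<le> V (fact (n + d - 2)) \<and> d' \<le> i + 1"
  proof (cases "c0 = 0")
    case True
    have uJ: "u j = 0" if "j \<in> J" for j using True finJ that unfolding c0_def by (simp add: sum_eq_0_iff)
    have F00: "F0 = 0" unfolding F0_def using uJ by (simp add: V_def)
    have ds: "d = s" using d_sc True by simp
    have pnd: "p dvd n + d"
    proof -
      have "(\<Sum>j\<in>J. j * u j) = 0" using uJ by simp
      hence "n + d = (\<Sum>j\<in>S. (j + 1) * u j)" using ns ds by simp
      also have "p dvd \<dots>" by (intro dvd_sum dvd_mult2) (simp add: S_def)
      finally show ?thesis .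
    qed
    have mip: "(m + i) * p > i" using assms(3,4) by linarith
    have nip: "n + i = (m + i) * p" using assms(3) mip by simp
    have "d \<noteq> i + 1"
    proof
      assume "d = i + 1"
      hence "n + d = (m + i) * p + 1" using nip by simp
      hence "p dvd (m + i) * p + 1" using pnd by simp
      hence "p dvd 1" by (metis dvd_add_right_iff dvd_triv_right)
      thus False using p2 by simp
    qed
    hence di: "d \<le> i" using assms(7) d_def by simp
    show ?thesis
    proof (cases "0 < g")
      case False
      thus ?thesis using deg' ds F00 di by simp
    next
      case True
      have "p \<le> n + d" using pnd assms(4) by (intro dvd_imp_le) auto
      hence nd2: "n + d \<ge> 2" using p2 by simp
      have e: "n + d' - 2 = Suc (n + d - 2)" using deg' True ds nd2 by simp
      have ndv: "\<not> p dvd Suc (n + d - 2)"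
      proof
        assume a: "p dvd Suc (n + d - 2)"
        have "n + d = Suc (n + d - 2) + 1" using nd2 by simp
        hence "p dvd Suc (n + d - 2) + 1" using pnd by simp
        thus False using a p2 by (metis dvd_add_right_iff nat_dvd_1_iff_1 numeral_le_one_iff semiring_norm(69))
      qed
      have "V (fact (Suc (n + d - 2))) = V (Suc (n + d - 2)) + V (fact (n + d - 2))"
        unfolding V_def fact_Suc of_nat_id by (rule prime_elem_multiplicity_mult_distrib[OF pe]) auto
      also have "V (Suc (n + d - 2)) = 0" using ndv by (simp add: V_def not_dvd_imp_multiplicity_0)
      finally have "V (fact (Suc (n + d - 2))) = V (fact (n + d - 2))" by simp
      thus ?thesis using e F00 deg' True ds di by simp
    qed
  next
    case False
    then obtain j0 where j0: "j0 \<in> J" "u j0 \<noteq> 0" unfolding c0_def using finJ by (auto simp: sum_eq_0_iff)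
    have j0pos: "j0 \<ge> 1" using j0 u0 by (cases j0) auto
    have "j0 * u j0 \<le> (\<Sum>j\<in>J. j * u j)" using finJ j0 by (intro member_le_sum) auto
    moreover have "1 \<le> j0 * u j0" using j0pos j0 by simp
    ultimately have "W < n" using n_split WS by linarith
    hence gpos: "0 < g" by (simp add: g_def)
    have dd: "d' = s + 1" using deg' gpos by simp
    have c0pos: "c0 \<ge> 1" using False by simp
    have dle: "d' \<le> i + 1" using dd d_sc c0pos assms(7) d_def by simp
    define N' where "N' = n + s - 1"
    have N'e: "n + d' - 2 = N'" using dd by (simp add: N'_def)
    have Ne: "n + d - 2 = N' + (c0 - 1)" using d_sc c0pos assms(4) by (simp add: N'_def)
    define K where "K = n + d"
    have L1: "V (fact N') = (\<Sum>a\<in>{1..K}. N' div p ^ a)" unfolding V_def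
      by (rule legendre[OF p]) (simp add: N'_def K_def d_sc)
    have L2: "V (fact (N' + (c0 - 1))) = (\<Sum>a\<in>{1..K}. (N' + (c0 - 1)) div p ^ a)" unfolding V_def
      by (rule legendre[OF p]) (simp add: N'_def K_def d_sc)
    have L3: "F0 = (\<Sum>a\<in>{1..K}. (\<Sum>j\<in>J. u j div p ^ a))"
    proof -
      have "F0 = (\<Sum>j\<in>J. (\<Sum>a\<in>{1..K}. u j div p ^ a))" unfolding F0_def V_def
      proof (intro sum.cong refl legendre[OF p])
        fix j assume "j \<in> J"
        hence "u j \<le> c0" unfolding c0_def using finJ by (intro member_le_sum) auto
        thus "u j \<le> K" using d_sc by (simp add: K_def)
      qed
      thus ?thesis by (simp add: sum.swap[of _ J])
    qed
    have pns: "p dvd n + s" if "\<forall>j\<in>J. p dvd u j"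
    proof -
      have "p dvd (\<Sum>j\<in>S. (j + 1) * u j)" by (intro dvd_sum dvd_mult2) (simp add: S_def)
      moreover have "p dvd (\<Sum>j\<in>J. j * u j)" using that by (intro dvd_sum dvd_mult) auto
      ultimately show ?thesis unfolding ns by (rule dvd_add)
    qed
    have per: "N' div p ^ a + (\<Sum>j\<in>J. u j div p ^ a) \<le> (N' + (c0 - 1)) div p ^ a" if a: "a \<in> {1..K}" for a
    proof (rule arith_block)
      have pq: "p dvd p ^ a" using a by (simp add: dvd_power)
      show "p ^ a > 0" using p2 by simp
      have "(\<Sum>j\<in>J. u j div p ^ a) * p ^ a = (\<Sum>j\<in>J. u j div p ^ a * p ^ a)" by (rule sum_distrib_right)
      also have "\<dots> \<le> c0" unfolding c0_def by (intro sum_mono div_times_less_eq_dividend)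
      finally show "(\<Sum>j\<in>J. u j div p ^ a) * p ^ a \<le> c0" .
      show "c0 \<ge> 1" by fact
      assume eq: "(\<Sum>j\<in>J. u j div p ^ a) * p ^ a = c0"
      have all: "\<forall>j\<in>J. u j div p ^ a * p ^ a = u j"
      proof (rule ccontr)
        assume "\<not> ?thesis"
        then obtain j where j: "j \<in> J" "u j div p ^ a * p ^ a \<noteq> u j" by blast
        have "u j div p ^ a * p ^ a \<le> u j" by (rule div_times_less_eq_dividend)
        hence "u j div p ^ a * p ^ a < u j" using j by linarith
        hence "(\<Sum>j\<in>J. u j div p ^ a * p ^ a) < (\<Sum>j\<in>J. u j)"
          using finJ j by (intro sum_strict_mono_ex1) (auto simp: div_times_less_eq_dividend)
        thus False using eq unfolding c0_def by (simp add: sum_distrib_right)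
      qed
      have "\<forall>j\<in>J. p dvd u j"
      proof
        fix j assume "j \<in> J"
        hence "p ^ a dvd u j" using all by (metis dvd_triv_right)
        thus "p dvd u j" using pq by (rule dvd_trans[rotated])
      qed
      hence pns': "p dvd n + s" by (rule pns)
      show "N' mod p ^ a \<noteq> 0"
      proof
        assume "N' mod p ^ a = 0"
        hence "p ^ a dvd N'" by auto
        hence pN: "p dvd N'" using pq by (rule dvd_trans[rotated])
        have "n + s = N' + 1" using assms(4) by (simp add: N'_def)
        thus False using pns' pN p2 by (metis dvd_add_right_iff nat_dvd_1_iff_1 numeral_le_one_iff semiring_norm(69))
      qed
    qed
    have "V (fact N') + F0 \<le> V (fact (N' + (c0 - 1)))"
      unfolding L1 L2 L3 sum.distrib[symmetric] by (intro sum_mono per)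
    thus ?thesis using N'e Ne dle by simp
  qed
  have t1: "vp_rat p (tau u) = int (V (fact (n + d - 2))) - int (GS + F0)"
    using vp_tau[OF p assms(5)] VgU assms(6) unfolding d_def V_def by simp
  have t2: "vp_rat p (tau u') = int (V (fact (n + d' - 2))) - int (V (gamma u'))"
    using vp_tau[OF p part'] wt' unfolding d'_def V_def by simp
  have "vp_rat p (tau u') \<le> vp_rat p (tau u)" unfolding t1 t2 using key VgU' by linarith
  thus ?thesis using part' red' wt' key unfolding d'_def by blast
qed

end
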